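(* Let $n\in\mathbb{N}$ and let $\|\cdot\|_u$ be a unitarily-invariant norm on $\mathbb{M}_n(\mathbb{C})$. Let $N\in\mathbb{M}_n(\mathbb{C})$ be normal and $A\in\mathbb{M}_n(\mathbb{C})$, and suppose $\|p(A)\|_u=\|p(N)\|_u$ for every polynomial $p$ with complex coefficients. Then $A$ is normal. If moreover $\|\cdot\|_u$ separates projections by rank, then $A$ and $N$ are unitarily similar.
   Context: A norm $\|\cdot\|_u$ on $\mathbb{M}_n(\mathbb{C})$ is unitarily-invariant if $\|UXV\|_u=\|X\|_u$ for all $X$ and all unitaries $U,V$. It separates projections by rank if whenever $P,Q$ are orthogonal projections ($P=P^2=P^*$) with $\operatorname{rank}P\ne\operatorname{rank}Q$, then $\|P\|_u\neq\|Q\|_u$. *)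

theory Defs
  imports "HOL-Analysis.Analysis" "HOL-Computational_Algebra.Polynomial"
begin

type_synonym 'n cmat = "complex^'n^'n"

definition cmat_adjoint :: "'n::finite cmat \<Rightarrow> 'n cmat" where
  "cmat_adjoint A = (\<chi> i j. cnj (A $ j $ i))"

definition cmat_scale :: "complex \<Rightarrow> 'n::finite cmat \<Rightarrow> 'n cmat" where
  "cmat_scale c A = (\<chi> i j. c * A $ i $ j)"

definition cmat_unitary :: "'n::finite cmat \<Rightarrow> bool" where
  "cmat_unitary U \<longleftrightarrow> U ** cmat_adjoint U = mat 1 \<and> cmat_adjoint U ** U = mat 1"

definition cmat_normal :: "'n::finite cmat \<Rightarrow> bool" where
  "cmat_normal A \<longleftrightarrow> A ** cmat_adjoint A = cmat_adjoint A ** A"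

definition cmat_projection :: "'n::finite cmat \<Rightarrow> bool" where
  "cmat_projection P \<longleftrightarrow> P ** P = P \<and> cmat_adjoint P = P"

definition cmat_pow :: "'n::finite cmat \<Rightarrow> nat \<Rightarrow> 'n cmat" where
  "cmat_pow A k = ((\<lambda>X. A ** X) ^^ k) (mat 1)"

definition cmat_poly :: "complex poly \<Rightarrow> 'n::finite cmat \<Rightarrow> 'n cmat" where
  "cmat_poly p A = (\<Sum>i\<le>degree p. cmat_scale (coeff p i) (cmat_pow A i))"

definition is_cmat_norm :: "('n::finite cmat \<Rightarrow> real) \<Rightarrow> bool" where
  "is_cmat_norm nu \<longleftrightarrow>
     (\<forall>X. 0 \<le> nu X) \<and> (\<forall>X. nu X = 0 \<longleftrightarrow> X = 0) \<and>
     (\<forall>c X. nu (cmat_scale c X) = cmod c * nu X) \<and>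
     (\<forall>X Y. nu (X + Y) \<le> nu X + nu Y)"

definition unitarily_invariant_norm :: "('n::finite cmat \<Rightarrow> real) \<Rightarrow> bool" where
  "unitarily_invariant_norm nu \<longleftrightarrow> is_cmat_norm nu \<and>
     (\<forall>X U V. cmat_unitary U \<longrightarrow> cmat_unitary V \<longrightarrow> nu (U ** X ** V) = nu X)"

definition separates_projections_by_rank :: "('n::finite cmat \<Rightarrow> real) \<Rightarrow> bool" where
  "separates_projections_by_rank nu \<longleftrightarrow>
     (\<forall>P Q. cmat_projection P \<longrightarrow> cmat_projection Q \<longrightarrow> rank P \<noteq> rank Q \<longrightarrow> nu P \<noteq> nu Q)"

definition unitarily_similar :: "'n::finite cmat \<Rightarrow> 'n cmat \<Rightarrow> bool" where
  "unitarily_similar A B \<longleftrightarrow> (\<exists>U. cmat_unitary U \<and> A = U ** B ** cmat_adjoint U)"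

end

theory Submission
  imports Defs "HOL-Computational_Algebra.Fundamental_Theorem_Algebra"
begin


definition cdiag :: "('n::finite \<Rightarrow> complex) \<Rightarrow> 'n cmat" where
  "cdiag d = (\<chi> i j. if i = j then d i else 0)"

lemma adj_nth[simp]: "cmat_adjoint A $ i $ j = cnj (A $ j $ i)"
  by (simp add: cmat_adjoint_def)
lemma scale_nth[simp]: "cmat_scale c A $ i $ j = c * A $ i $ j"
  by (simp add: cmat_scale_def)
lemma cdiag_nth[simp]: "cdiag d $ i $ j = (if i = j then d i else 0)"
  by (simp add: cdiag_def)
lemma mat_nth: "mat c $ i $ j = (if i = j then c else 0)"
  by (simp add: mat_def)

lemma mmult_nth: "(A ** B) $ i $ j = (\<Sum>k\<in>UNIV. A $ i $ k * B $ k $ j)"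
  by (simp add: matrix_matrix_mult_def)

lemma adj_adj[simp]: "cmat_adjoint (cmat_adjoint A) = A"
  by (simp add: vec_eq_iff)
lemma adj_mult: "cmat_adjoint (A ** B) = cmat_adjoint B ** cmat_adjoint A"
  by (simp add: vec_eq_iff mmult_nth mult.commute)
lemma adj_add: "cmat_adjoint (A + B) = cmat_adjoint A + cmat_adjoint B"
  by (simp add: vec_eq_iff)
lemma adj_diff: "cmat_adjoint (A - B) = cmat_adjoint A - cmat_adjoint B"
  by (simp add: vec_eq_iff)
lemma adj_scale: "cmat_adjoint (cmat_scale c A) = cmat_scale (cnj c) (cmat_adjoint A)"
  by (simp add: vec_eq_iff)
lemma adj_mat: "cmat_adjoint (mat c) = mat (cnj c)"
  by (simp add: vec_eq_iff mat_nth)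
lemma adj_0[simp]: "cmat_adjoint 0 = 0"
  by (simp add: vec_eq_iff)
lemma adj_sum: "cmat_adjoint (\<Sum>i\<in>F. f i) = (\<Sum>i\<in>F. cmat_adjoint (f i))"
  by (induct F rule: infinite_finite_induct) (auto simp: adj_add)
lemma adj_cdiag: "cmat_adjoint (cdiag d) = cdiag (\<lambda>i. cnj (d i))"
  by (simp add: vec_eq_iff)

lemma scale_mult_left: "cmat_scale c A ** B = cmat_scale c (A ** B)"
  by (simp add: vec_eq_iff mmult_nth sum_distrib_left mult.assoc)
lemma scale_mult_right: "A ** cmat_scale c B = cmat_scale c (A ** B)"
  by (simp add: vec_eq_iff mmult_nth sum_distrib_left mult.left_commute)
lemma scale_add_right: "cmat_scale c (A + B) = cmat_scale c A + cmat_scale c B"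
  by (simp add: vec_eq_iff distrib_left)
lemma scale_diff_right: "cmat_scale c (A - B) = cmat_scale c A - cmat_scale c B"
  by (simp add: vec_eq_iff right_diff_distrib)
lemma scale_add_left: "cmat_scale (c + d) A = cmat_scale c A + cmat_scale d A"
  by (simp add: vec_eq_iff distrib_right)
lemma scale_0_left[simp]: "cmat_scale 0 A = 0"
  by (simp add: vec_eq_iff)
lemma scale_0_right[simp]: "cmat_scale c 0 = 0"
  by (simp add: vec_eq_iff)
lemma scale_1[simp]: "cmat_scale 1 A = A"
  by (simp add: vec_eq_iff)
lemma scale_scale: "cmat_scale c (cmat_scale d A) = cmat_scale (c * d) A"
  by (simp add: vec_eq_iff)
lemma scale_sum_right: "cmat_scale c (\<Sum>i\<in>F. f i) = (\<Sum>i\<in>F. cmat_scale c (f i))"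
  by (induct F rule: infinite_finite_induct) (auto simp: scale_add_right)
lemma scale_sum_left: "cmat_scale (\<Sum>i\<in>F. f i) A = (\<Sum>i\<in>F. cmat_scale (f i) A)"
  by (induct F rule: infinite_finite_induct) (auto simp: scale_add_left)
lemma scale_mat: "cmat_scale c (mat d) = mat (c * d)"
  by (simp add: vec_eq_iff mat_nth)
lemma scale_cdiag: "cmat_scale c (cdiag d) = cdiag (\<lambda>i. c * d i)"
  by (simp add: vec_eq_iff)
lemma scale_minus1: "cmat_scale (-1) A = - A"
  by (simp add: vec_eq_iff)

lemma mult_add_left: "(A + B) ** C = A ** C + B ** (C :: 'n cmat)" for A B :: "'n::finite cmat"
  by (simp add: vec_eq_iff mmult_nth distrib_right sum.distrib)
lemma mult_add_right: "C ** (A + B) = C ** A + C ** (B :: 'n cmat)" for C :: "'n::finite cmat"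
  by (simp add: vec_eq_iff mmult_nth distrib_left sum.distrib)
lemma mult_diff_left: "(A - B) ** C = A ** C - B ** (C :: 'n cmat)" for A B :: "'n::finite cmat"
  by (simp add: vec_eq_iff mmult_nth left_diff_distrib sum_subtractf)
lemma mult_diff_right: "C ** (A - B) = C ** A - C ** (B :: 'n cmat)" for C :: "'n::finite cmat"
  by (simp add: vec_eq_iff mmult_nth right_diff_distrib sum_subtractf)
lemma mult_sum_left: "(\<Sum>i\<in>F. f i) ** (C :: 'n cmat) = (\<Sum>i\<in>F. f i ** C)" for f :: "_ \<Rightarrow> 'n::finite cmat"
  by (induct F rule: infinite_finite_induct) (auto simp: mult_add_left)
lemma mult_sum_right: "(C :: 'n cmat) ** (\<Sum>i\<in>F. f i) = (\<Sum>i\<in>F. C ** f i)" for f :: "_ \<Rightarrow> 'n::finite cmat"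
  by (induct F rule: infinite_finite_induct) (auto simp: mult_add_right)

lemma cdiag_mult: "cdiag a ** cdiag b = cdiag (\<lambda>i. a i * b i)"
proof -
  have "(\<Sum>k\<in>UNIV. (if i = k then a i else 0) * (if k = j then b k else 0)) = (if i = j then a i * b i else 0)"
    for i j
  proof -
    have "(\<Sum>k\<in>UNIV. (if i = k then a i else 0) * (if k = j then b k else 0)) =
          (\<Sum>k\<in>UNIV. if k = i then (if i = j then a i * b i else 0) else 0)"
      by (rule sum.cong) auto
    then show ?thesis by simp
  qed
  then show ?thesis by (simp add: vec_eq_iff mmult_nth)
qed
lemma cdiag_add: "cdiag a + cdiag b = cdiag (\<lambda>i. a i + b i)"
  by (simp add: vec_eq_iff)
lemma cdiag_diff: "cdiag a - cdiag b = cdiag (\<lambda>i. a i - b i)"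
  by (simp add: vec_eq_iff)
lemma cdiag_zero[simp]: "cdiag (\<lambda>i. 0) = 0"
  by (simp add: vec_eq_iff)
lemma cdiag_sum: "(\<Sum>k\<in>F. cdiag (f k)) = cdiag (\<lambda>i. \<Sum>k\<in>F. f k i)"
  by (induct F rule: infinite_finite_induct) (simp_all add: cdiag_add)
lemma cdiag_const: "cdiag (\<lambda>_. c) = mat c"
  by (simp add: vec_eq_iff mat_nth)
lemma cdiag_eq_iff: "cdiag a = cdiag b \<longleftrightarrow> a = b"
  by (auto simp: vec_eq_iff fun_eq_iff)
lemma cdiag_eq_0: "cdiag a = 0 \<longleftrightarrow> (\<forall>i. a i = 0)"
  by (auto simp: vec_eq_iff)

lemma unitaryD1: "cmat_unitary U \<Longrightarrow> U ** cmat_adjoint U = mat 1"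
  and unitaryD2: "cmat_unitary U \<Longrightarrow> cmat_adjoint U ** U = mat 1"
  by (auto simp: cmat_unitary_def)
lemma unitary_I: "cmat_unitary U \<longleftrightarrow> cmat_adjoint U ** U = mat 1"
  unfolding cmat_unitary_def by (metis matrix_left_right_inverse)
lemma unitary_mat1: "cmat_unitary (mat 1)"
  by (simp add: unitary_I adj_mat)
lemma unitary_adj: "cmat_unitary U \<Longrightarrow> cmat_unitary (cmat_adjoint U)"
  by (auto simp: cmat_unitary_def)
lemma unitary_mult: "cmat_unitary U \<Longrightarrow> cmat_unitary V \<Longrightarrow> cmat_unitary (U ** V)"
proof -
  assume u: "cmat_unitary U" and v: "cmat_unitary V"
  have "cmat_adjoint (U ** V) ** (U ** V) = cmat_adjoint V ** (cmat_adjoint U ** U) ** V"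
    by (simp add: adj_mult matrix_mul_assoc)
  also have "\<dots> = mat 1" using u v by (simp add: unitaryD2)
  finally show ?thesis by (simp add: unitary_I)
qed

lemma conj_conj: "cmat_unitary U \<Longrightarrow> cmat_adjoint U ** (U ** X ** cmat_adjoint U) ** U = X"
proof -
  assume u: "cmat_unitary U"
  have "cmat_adjoint U ** (U ** X ** cmat_adjoint U) ** U = (cmat_adjoint U ** U) ** X ** (cmat_adjoint U ** U)"
    by (simp only: matrix_mul_assoc)
  then show ?thesis using u by (simp add: unitaryD2)
qed

lemma conj_mult: "cmat_unitary U \<Longrightarrow>
   (U ** X ** cmat_adjoint U) ** (U ** Y ** cmat_adjoint U) = U ** (X ** Y) ** cmat_adjoint U"
proof -
  assume u: "cmat_unitary U"
  have "(U ** X ** cmat_adjoint U) ** (U ** Y ** cmat_adjoint U) =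
        U ** X ** (cmat_adjoint U ** U) ** Y ** cmat_adjoint U"
    by (simp add: matrix_mul_assoc)
  then show ?thesis using u by (simp add: unitaryD2 matrix_mul_assoc)
qed

lemma conj_add: "U ** (X + Y) ** V = U ** X ** V + U ** Y ** (V :: 'n cmat)" for U :: "'n::finite cmat"
  by (simp add: mult_add_left mult_add_right)
lemma conj_diff: "U ** (X - Y) ** V = U ** X ** V - U ** Y ** (V :: 'n cmat)" for U :: "'n::finite cmat"
  by (simp add: mult_diff_left mult_diff_right)
lemma conj_scale: "U ** (cmat_scale c X) ** V = cmat_scale c (U ** X ** (V :: 'n cmat))" for U :: "'n::finite cmat"
  by (simp add: scale_mult_left scale_mult_right)
lemma conj_sum: "U ** (\<Sum>i\<in>F. f i) ** V = (\<Sum>i\<in>F. U ** f i ** (V :: 'n cmat))" for U :: "'n::finite cmat"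
  by (simp add: mult_sum_left mult_sum_right)
lemma conj_0: "U ** 0 ** V = (0 :: 'n cmat)" for U :: "'n::finite cmat"
  by simp
lemma conj_I: "cmat_unitary U \<Longrightarrow> U ** mat 1 ** cmat_adjoint U = mat 1"
  by (simp add: unitaryD1)

lemma uin_norm: "unitarily_invariant_norm nu \<Longrightarrow> is_cmat_norm nu"
  by (simp add: unitarily_invariant_norm_def)
lemma uin_inv: "unitarily_invariant_norm nu \<Longrightarrow> cmat_unitary U \<Longrightarrow> cmat_unitary V \<Longrightarrow> nu (U ** X ** V) = nu X"
  by (simp add: unitarily_invariant_norm_def)
lemma nrm_0: "is_cmat_norm nu \<Longrightarrow> nu X = 0 \<longleftrightarrow> X = 0"
  by (simp add: is_cmat_norm_def)
lemma nrm_ge0: "is_cmat_norm nu \<Longrightarrow> 0 \<le> nu X"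
  by (simp add: is_cmat_norm_def)
lemma nrm_scale: "is_cmat_norm nu \<Longrightarrow> nu (cmat_scale c X) = cmod c * nu X"
  by (simp add: is_cmat_norm_def)
lemma nrm_tri: "is_cmat_norm nu \<Longrightarrow> nu (X + Y) \<le> nu X + nu Y"
  by (simp add: is_cmat_norm_def)




lemma scale_diff_left: "cmat_scale (c - d) A = cmat_scale c A - cmat_scale d A"
  by (simp add: vec_eq_iff left_diff_distrib)
lemma mat_mult_left: "mat a ** Q = cmat_scale a (Q :: 'n::finite cmat)"
proof -
  have "mat a = cmat_scale a (mat 1 :: 'n cmat)" by (simp add: scale_mat)
  then show ?thesis by (simp add: scale_mult_left)
qed
lemma mat_mult_right: "Q ** mat a = cmat_scale a (Q :: 'n::finite cmat)"
proof -
  have "mat a = cmat_scale a (mat 1 :: 'n cmat)" by (simp add: scale_mat)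
  then show ?thesis by (simp add: scale_mult_right)
qed

lemma pow_0[simp]: "cmat_pow A 0 = mat 1"
  by (simp add: cmat_pow_def)
lemma pow_Suc: "cmat_pow A (Suc k) = A ** cmat_pow A k"
  by (simp add: cmat_pow_def)

lemma cpoly_bound:
  assumes "degree p \<le> m"
  shows "cmat_poly p A = (\<Sum>i\<le>m. cmat_scale (coeff p i) (cmat_pow A i))"
  unfolding cmat_poly_def
proof (rule sum.mono_neutral_left)
  show "\<forall>i\<in>{..m} - {..degree p}. cmat_scale (coeff p i) (cmat_pow A i) = 0"
    by (auto simp: coeff_eq_0)
qed (use assms in auto)

lemma cpoly_add: "cmat_poly (p + q) A = cmat_poly p A + cmat_poly q A"
proof -
  let ?m = "max (degree p) (degree q)"
  have "cmat_poly (p + q) A = (\<Sum>i\<le>?m. cmat_scale (coeff (p + q) i) (cmat_pow A i))"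
    by (rule cpoly_bound) (rule degree_add_le; simp)
  also have "\<dots> = (\<Sum>i\<le>?m. cmat_scale (coeff p i) (cmat_pow A i)) + (\<Sum>i\<le>?m. cmat_scale (coeff q i) (cmat_pow A i))"
    by (simp add: scale_add_left sum.distrib)
  also have "\<dots> = cmat_poly p A + cmat_poly q A"
    by (simp add: cpoly_bound[symmetric])
  finally show ?thesis .
qed

lemma cpoly_diff: "cmat_poly (p - q) A = cmat_poly p A - cmat_poly q A"
proof -
  let ?m = "max (degree p) (degree q)"
  have "cmat_poly (p - q) A = (\<Sum>i\<le>?m. cmat_scale (coeff (p - q) i) (cmat_pow A i))"
    by (rule cpoly_bound) (rule degree_diff_le; simp)
  also have "\<dots> = (\<Sum>i\<le>?m. cmat_scale (coeff p i) (cmat_pow A i)) - (\<Sum>i\<le>?m. cmat_scale (coeff q i) (cmat_pow A i))"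
    by (simp add: scale_diff_left sum_subtractf)
  also have "\<dots> = cmat_poly p A - cmat_poly q A"
    by (simp add: cpoly_bound[symmetric])
  finally show ?thesis .
qed

lemma cpoly_smult: "cmat_poly (smult c p) A = cmat_scale c (cmat_poly p A)"
proof -
  have "cmat_poly (smult c p) A = (\<Sum>i\<le>degree p. cmat_scale (coeff (smult c p) i) (cmat_pow A i))"
    by (rule cpoly_bound) (rule degree_smult_le)
  also have "\<dots> = cmat_scale c (cmat_poly p A)"
    by (simp add: cmat_poly_def scale_sum_right scale_scale)
  finally show ?thesis .
qed

lemma cpoly_0[simp]: "cmat_poly 0 A = 0"
  by (simp add: cmat_poly_def)

lemma cpoly_const: "cmat_poly [:c:] A = mat c"
  by (simp add: cmat_poly_def scale_mat)

lemma cpoly_pCons0: "cmat_poly (pCons 0 p) A = A ** cmat_poly p A"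
proof -
  have "cmat_poly (pCons 0 p) A = (\<Sum>i\<le>Suc (degree p). cmat_scale (coeff (pCons 0 p) i) (cmat_pow A i))"
    by (rule cpoly_bound) (simp add: degree_pCons_le)
  also have "\<dots> = (\<Sum>i\<le>degree p. cmat_scale (coeff (pCons 0 p) (Suc i)) (cmat_pow A (Suc i))) +
                   cmat_scale (coeff (pCons 0 p) 0) (cmat_pow A 0)"
    by (rule sum.atMost_Suc_shift[THEN trans]) simp
  also have "\<dots> = (\<Sum>i\<le>degree p. A ** cmat_scale (coeff p i) (cmat_pow A i))"
    by (simp add: pow_Suc scale_mult_right)
  also have "\<dots> = A ** cmat_poly p A"
    by (simp add: cmat_poly_def mult_sum_right)
  finally show ?thesis .
qed

lemma cpoly_pCons: "cmat_poly (pCons a p) A = mat a + A ** cmat_poly p A"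
proof -
  have "pCons a p = [:a:] + pCons 0 p" by simp
  then show ?thesis by (simp only: cpoly_add cpoly_const cpoly_pCons0)
qed

lemma cpoly_1: "cmat_poly 1 A = mat 1"
  by (simp add: one_pCons cpoly_const)

lemma cpoly_X: "cmat_poly [:0, 1:] A = A"
  by (simp add: cpoly_pCons0 cpoly_const del: pCons_0_0)

lemma cpoly_mult: "cmat_poly (p * q) A = cmat_poly p A ** cmat_poly q A"
proof (induct p)
  case 0
  then show ?case by simp
next
  case (pCons a p)
  have "cmat_poly (pCons a p * q) A = cmat_poly (smult a q + pCons 0 (p * q)) A"
    by (simp only: mult_pCons_left)
  also have "\<dots> = cmat_scale a (cmat_poly q A) + A ** (cmat_poly p A ** cmat_poly q A)"
    by (simp only: cpoly_add cpoly_smult cpoly_pCons0 pCons(2))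
  also have "\<dots> = cmat_poly (pCons a p) A ** cmat_poly q A"
    by (simp add: cpoly_pCons mult_add_left mat_mult_left matrix_mul_assoc)
  finally show ?case .
qed

lemma cpoly_comm: "cmat_poly p A ** cmat_poly q A = cmat_poly q A ** cmat_poly p A"
  by (metis cpoly_mult mult.commute)

lemma cpoly_sum: "cmat_poly (\<Sum>i\<in>F. f i) A = (\<Sum>i\<in>F. cmat_poly (f i) A)"
  by (induct F rule: infinite_finite_induct) (simp_all add: cpoly_add)

lemma cpoly_monom: "cmat_poly (monom 1 j) A = cmat_pow A j"
  by (induct j) (simp_all add: monom_Suc cpoly_pCons0 pow_Suc cpoly_1 del: pCons_0_0)

lemma cpoly_conj:
  assumes u: "cmat_unitary U"
  shows "cmat_poly p (U ** D ** cmat_adjoint U) = U ** cmat_poly p D ** cmat_adjoint U"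
proof (induct p)
  case 0
  then show ?case by simp
next
  case (pCons a p)
  have "mat a = U ** mat a ** cmat_adjoint U"
    by (simp add: mat_mult_right scale_mult_left unitaryD1 u scale_mat)
  then show ?case
    by (simp add: cpoly_pCons pCons(2) conj_add conj_mult[OF u])
qed

lemma cpoly_cdiag: "cmat_poly p (cdiag d) = cdiag (\<lambda>i. poly p (d i))"
proof (induct p)
  case 0
  then show ?case by simp
next
  case (pCons a p)
  then show ?case
    by (simp add: cpoly_pCons cdiag_mult cdiag_const[symmetric] cdiag_add)
qed




definition cinner :: "complex^'n::finite \<Rightarrow> complex^'n \<Rightarrow> complex" where
  "cinner x y = (\<Sum>i\<in>UNIV. x $ i * cnj (y $ i))"

lemma cinner_add_left: "cinner (x + y) z = cinner x z + cinner y z"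
  by (simp add: cinner_def distrib_right sum.distrib)
lemma cinner_diff_left: "cinner (x - y) z = cinner x z - cinner y z"
  by (simp add: cinner_def left_diff_distrib sum_subtractf)
lemma cinner_scale_left: "cinner (c *s x) z = c * cinner x z"
  by (simp add: cinner_def sum_distrib_left mult.assoc)
lemma cinner_scale_right: "cinner x (c *s z) = cnj c * cinner x z"
  by (simp add: cinner_def sum_distrib_left mult.left_commute)
lemma cinner_zero_left[simp]: "cinner 0 z = 0"
  by (simp add: cinner_def)
lemma cinner_commute: "cinner y x = cnj (cinner x y)"
  by (simp add: cinner_def mult.commute)
lemma cinner_mat: "cinner (M *v x) y = cinner x (cmat_adjoint M *v y)"
proof -
  have "cinner (M *v x) y = (\<Sum>i\<in>UNIV. \<Sum>j\<in>UNIV. M $ i $ j * x $ j * cnj (y $ i))"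
    by (simp add: cinner_def matrix_vector_mult_def sum_distrib_right)
  also have "\<dots> = (\<Sum>j\<in>UNIV. \<Sum>i\<in>UNIV. M $ i $ j * x $ j * cnj (y $ i))"
    by (rule sum.swap)
  also have "\<dots> = cinner x (cmat_adjoint M *v y)"
    by (simp add: cinner_def matrix_vector_mult_def sum_distrib_left mult_ac)
  finally show ?thesis .
qed

definition cnorm2 :: "complex^'n::finite \<Rightarrow> real" where
  "cnorm2 x = (\<Sum>i\<in>UNIV. (cmod (x $ i))\<^sup>2)"

lemma cinner_self: "cinner x x = complex_of_real (cnorm2 x)"
  unfolding cinner_def cnorm2_def of_real_sum
  by (rule sum.cong[OF refl]) (rule complex_norm_square[symmetric])
lemma cnorm2_ge0: "0 \<le> cnorm2 x"
  by (simp add: cnorm2_def sum_nonneg)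
lemma cnorm2_eq0: "cnorm2 x = 0 \<longleftrightarrow> x = 0"
  by (simp add: cnorm2_def sum_nonneg_eq_0_iff vec_eq_iff)
lemma cinner_self_eq0: "cinner x x = 0 \<longleftrightarrow> x = 0"
  by (simp add: cinner_self cnorm2_eq0)

lemma mat_mult_vec: "mat c *v v = c *s v"
  by (simp add: vec_eq_iff matrix_vector_mult_def mat_def if_distrib if_distribR cong: if_cong)

lemma scale_mult_vec: "cmat_scale c M *v v = c *s (M *v v)"
  by (simp add: vec_eq_iff matrix_vector_mult_def sum_distrib_left mult.assoc)

lemma sum_mult_vec: "(\<Sum>i\<in>F. f i) *v v = (\<Sum>i\<in>F. f i *v (v :: complex^'n))"
  for f :: "_ \<Rightarrow> 'n::finite cmat"
  by (induct F rule: infinite_finite_induct) (simp_all add: matrix_vector_mult_add_rdistrib)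

lemma cpoly_lin1: "cmat_poly [:-z, 1:] N = N - mat z"
proof -
  have "cmat_poly [:-z, 1:] N = mat (-z) + N ** cmat_poly [:1:] N"
    by (rule cpoly_pCons)
  also have "\<dots> = mat (-z) + N" by (simp add: cpoly_const cpoly_1)
  also have "\<dots> = N - mat z" by (simp add: vec_eq_iff mat_def)
  finally show ?thesis .
qed

lemma cpoly_monom_c: "cmat_poly (monom c i) N = cmat_scale c (cmat_pow N i)"
proof -
  have "monom c i = smult c (monom 1 i)" by (simp add: smult_monom)
  then show ?thesis by (simp add: cpoly_smult cpoly_monom)
qed

lemma krylov:
  fixes N :: "'n::finite cmat"
  shows "\<exists>p. p \<noteq> 0 \<and> cmat_poly p N *v v = 0"
proof -
  let ?n = "CARD('n)"
  define g where "g k = cmat_pow N k *v v" for k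
  show ?thesis
  proof (cases "inj_on g {..?n}")
    case False
    then obtain i j where ij: "i \<noteq> j" "g i = g j"
      unfolding inj_on_def by blast
    let ?p = "monom (1::complex) i - monom 1 j"
    have "coeff ?p i = 1" using ij by simp
    then have "?p \<noteq> 0" by (metis coeff_0 zero_neq_one)
    moreover have "cmat_poly ?p N *v v = 0"
      using ij by (simp add: cpoly_diff cpoly_monom g_def matrix_vector_mult_diff_rdistrib)
    ultimately show ?thesis by blast
  next
    case True
    define S where "S = g ` {..?n}"
    have fS: "finite S" by (simp add: S_def)
    have cS: "card S = Suc ?n" using True by (simp add: S_def card_image)
    have "vec.dependent S"
    proof (rule ccontr)
      assume "vec.independent S"
      then have "card S \<le> vec.dim S" using vec.independent_bound_general by blast
      also have "\<dots> \<le> ?n" by (rule dim_subset_UNIV_cart_gen)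
      finally show False using cS by simp
    qed
    then obtain u where u: "\<exists>x\<in>S. u x \<noteq> 0" "(\<Sum>x\<in>S. u x *s x) = 0"
      using vec.dependent_finite[OF fS] by blast
    define p where "p = (\<Sum>k\<le>?n. monom (u (g k)) k)"
    have cp: "coeff p k = u (g k)" if "k \<le> ?n" for k
    proof -
      have "coeff p k = (\<Sum>j\<le>?n. if j = k then u (g k) else 0)"
        unfolding p_def coeff_sum by (rule sum.cong) (auto simp: coeff_monom)
      then show ?thesis using that by simp
    qed
    from u(1) obtain k where k: "k \<le> ?n" "u (g k) \<noteq> 0" by (auto simp: S_def)
    then have "p \<noteq> 0" using cp[OF k(1)] by auto
    moreover have "cmat_poly p N *v v = (\<Sum>k\<le>?n. u (g k) *s g k)"
      unfolding p_def cpoly_sum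
      by (simp add: sum_mult_vec cpoly_monom_c scale_mult_vec g_def)
    moreover have "(\<Sum>k\<le>?n. u (g k) *s g k) = (\<Sum>x\<in>S. u x *s x)"
      unfolding S_def using True by (simp add: sum.reindex)
    ultimately show ?thesis using u(2) by auto
  qed
qed

lemma eigen_in_subspace:
  fixes N :: "'n::finite cmat"
  assumes sub: "vec.subspace W" and inv: "\<forall>x\<in>W. N *v x \<in> W"
  shows "p \<noteq> 0 \<Longrightarrow> v \<in> W \<Longrightarrow> v \<noteq> 0 \<Longrightarrow> cmat_poly p N *v v = 0 \<Longrightarrow>
         \<exists>w \<mu>. w \<in> W \<and> w \<noteq> 0 \<and> N *v w = \<mu> *s w"
proof (induct "degree p" arbitrary: p v rule: less_induct)
  case less
  show ?case
  proof (cases "degree p = 0")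
    case True
    then have "p = [:coeff p 0:]" using degree_0_id by metis
    then have "cmat_poly p N *v v = coeff p 0 *s v"
      by (metis cpoly_const mat_mult_vec)
    moreover have "coeff p 0 \<noteq> 0" using \<open>p = _\<close> less.prems(1) by auto
    ultimately show ?thesis using less.prems by (simp add: vec_eq_iff)
  next
    case False
    then have "\<not> constant (poly p)" by (simp add: constant_degree)
    then obtain z where "poly p z = 0" using fundamental_theorem_of_algebra by blast
    then obtain q where pq: "p = [:-z, 1:] * q" by (auto simp: poly_eq_0_iff_dvd dvd_def)
    then have q0: "q \<noteq> 0" using less.prems(1) by auto
    have "degree p = degree [:-z, 1:] + degree q"
      unfolding pq by (rule degree_mult_eq) (use q0 in auto)
    then have dq: "degree q < degree p" by simp
    define w where "w = (N - mat z) *v v"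
    have "cmat_poly p N = cmat_poly [:-z,1:] N ** cmat_poly q N" by (simp only: pq cpoly_mult)
    also have "\<dots> = cmat_poly q N ** cmat_poly [:-z,1:] N" by (rule cpoly_comm)
    also have "\<dots> = cmat_poly q N ** (N - mat z)" by (simp only: cpoly_lin1)
    finally have Np: "cmat_poly p N = cmat_poly q N ** (N - mat z)" .
    show ?thesis
    proof (cases "w = 0")
      case True
      then have "N *v v = z *s v"
        by (simp add: w_def matrix_vector_mult_diff_rdistrib mat_mult_vec)
      then show ?thesis using less.prems by blast
    next
      case False
      have "w \<in> W"
        unfolding w_def matrix_vector_mult_diff_rdistrib mat_mult_vec
        using inv less.prems(2) sub
        by (simp add: vec.subspace_diff vec.subspace_scale)
      moreover have "cmat_poly q N *v w = 0"
        using less.prems(4) by (simp add: Np w_def matrix_vector_mul_assoc)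
      ultimately show ?thesis using less.hyps[OF dq q0 _ False] by blast
    qed
  qed
qed

lemma eigen_in_subspace':
  fixes N :: "'n::finite cmat"
  assumes sub: "vec.subspace W" and inv: "\<forall>x\<in>W. N *v x \<in> W" and "v \<in> W" "v \<noteq> 0"
  shows "\<exists>w \<mu>. w \<in> W \<and> w \<noteq> 0 \<and> N *v w = \<mu> *s w"
  using eigen_in_subspace[OF sub inv] krylov[of N v] assms(3,4) by blast

lemma normal_eigen_adj:
  assumes nN: "cmat_normal N" and ev: "N *v v = \<mu> *s v"
  shows "cmat_adjoint N *v v = cnj \<mu> *s v"
proof -
  define M where "M = N - mat \<mu>"
  have aM: "cmat_adjoint M = cmat_adjoint N - mat (cnj \<mu>)"
    by (simp add: M_def adj_diff adj_mat)
  have Mv: "M *v v = 0" using ev by (simp add: M_def matrix_vector_mult_diff_rdistrib mat_mult_vec)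
  have nM: "M ** cmat_adjoint M = cmat_adjoint M ** M"
  proof -
    have "M ** cmat_adjoint M = N ** cmat_adjoint N - cmat_scale (cnj \<mu>) N - cmat_scale \<mu> (cmat_adjoint N)
             + mat (\<mu> * cnj \<mu>)"
      unfolding aM unfolding M_def
      by (simp add: mult_diff_left mult_diff_right mat_mult_left mat_mult_right scale_mat scale_diff_right mult.commute)
    moreover have "cmat_adjoint M ** M = cmat_adjoint N ** N - cmat_scale (cnj \<mu>) N - cmat_scale \<mu> (cmat_adjoint N)
             + mat (\<mu> * cnj \<mu>)"
      unfolding aM unfolding M_def
      by (simp add: mult_diff_left mult_diff_right mat_mult_left mat_mult_right scale_mat scale_diff_right mult.commute)
    ultimately show ?thesis using nN by (simp add: cmat_normal_def)
  qed
  have "cinner (cmat_adjoint M *v v) (cmat_adjoint M *v v) = cinner v (M *v (cmat_adjoint M *v v))"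
    by (simp add: cinner_mat)
  also have "\<dots> = cinner v (cmat_adjoint M *v (M *v v))"
    by (simp add: matrix_vector_mul_assoc nM)
  also have "\<dots> = 0" using Mv by (simp add: cinner_def)
  finally have "cmat_adjoint M *v v = 0" by (simp add: cinner_self_eq0)
  then show ?thesis by (simp add: aM matrix_vector_mult_diff_rdistrib mat_mult_vec)
qed

lemma orth_complement_nonzero:
  fixes f :: "'n::finite \<Rightarrow> complex^'n"
  assumes "a \<notin> F"
  shows "\<exists>x. x \<noteq> 0 \<and> (\<forall>i\<in>F. cinner x (f i) = 0)"
proof -
  define M :: "'n cmat" where "M = (\<chi> j k. if j \<in> F then cnj (f j $ k) else 0)"
  have Mx: "(M *v x) $ j = (if j \<in> F then cinner x (f j) else 0)" for x j
    by (simp add: M_def matrix_vector_mult_def cinner_def mult.commute)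
  have "\<not> inj ((*v) M)"
  proof
    assume "inj ((*v) M)"
    then have "surj ((*v) M)"
      using vec.linear_inj_imp_surj[OF matrix_vector_mul_linear_gen] by blast
    then obtain y where "M *v y = axis a 1" by (metis surjD)
    then have "(M *v y) $ a = 1" by (simp add: axis_def)
    then show False using assms by (simp add: Mx)
  qed
  then obtain x y where xy: "x \<noteq> y" "M *v x = M *v y" unfolding inj_def by blast
  then have "M *v (x - y) = 0" by (simp add: matrix_vector_mult_diff_distrib)
  then have "\<forall>i\<in>F. cinner (x - y) (f i) = 0"
    by (metis Mx zero_index)
  then show ?thesis using xy(1) by (metis eq_iff_diff_eq_0)
qed

lemma onb_exists_F:
  fixes N :: "'n::finite cmat" and F :: "'n set"
  assumes nN: "cmat_normal N" and fin: "finite F"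
  shows "\<exists>f \<mu>. (\<forall>i\<in>F. cinner (f i) (f i) = 1 \<and> N *v f i = \<mu> i *s f i) \<and>
               (\<forall>i\<in>F. \<forall>j\<in>F. i \<noteq> j \<longrightarrow> cinner (f i) (f j) = 0)"
  using fin
proof (induct F rule: finite_induct)
  case empty
  show ?case by blast
next
  case (insert a F)
  from insert.hyps(3) obtain f \<mu> where fo: "(\<forall>i\<in>F. cinner (f i) (f i) = 1 \<and> N *v f i = \<mu> i *s f i) \<and>
     (\<forall>i\<in>F. \<forall>j\<in>F. i \<noteq> j \<longrightarrow> cinner (f i) (f j) = 0)" by iprover
  from fo have f: "\<forall>i\<in>F. cinner (f i) (f i) = 1 \<and> N *v f i = \<mu> i *s f i" by (rule conjunct1)
  from fo have o: "\<forall>i\<in>F. \<forall>j\<in>F. i \<noteq> j \<longrightarrow> cinner (f i) (f j) = 0" by (rule conjunct2)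
  define W where "W = {x. \<forall>i\<in>F. cinner x (f i) = 0}"
  have sub: "vec.subspace W"
    unfolding vec.subspace_def W_def
    by (simp add: cinner_add_left cinner_scale_left)
  have inv: "\<forall>x\<in>W. N *v x \<in> W"
  proof
    fix x assume "x \<in> W"
    show "N *v x \<in> W" unfolding W_def
    proof (rule CollectI, rule ballI)
      fix i assume i: "i \<in> F"
      have "cinner (N *v x) (f i) = cinner x (cmat_adjoint N *v f i)" by (rule cinner_mat)
      also have "\<dots> = cinner x (cnj (\<mu> i) *s f i)"
        using normal_eigen_adj[OF nN, of "f i" "\<mu> i"] f i by simp
      also have "\<dots> = 0" using \<open>x \<in> W\<close> i by (simp add: cinner_scale_right W_def)
      finally show "cinner (N *v x) (f i) = 0" .
    qed
  qed
  obtain v where v: "v \<noteq> 0" "v \<in> W"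
    using orth_complement_nonzero[OF insert(2), of f] by (auto simp: W_def)
  obtain w lam where w: "w \<in> W" "w \<noteq> 0" "N *v w = lam *s w"
    using eigen_in_subspace'[OF sub inv v(2) v(1)] by blast
  define r where "r = sqrt (cnorm2 w)"
  have r0: "r > 0" using w(2) cnorm2_ge0[of w] cnorm2_eq0[of w] by (simp add: r_def)
  have rr: "r * r = cnorm2 w" unfolding r_def using cnorm2_ge0[of w] by simp
  define e where "e = complex_of_real (1 / r) *s w"
  have "cinner e e = complex_of_real (1/r) * (cnj (complex_of_real (1/r)) * cinner w w)"
    unfolding e_def cinner_scale_left cinner_scale_right by (rule mult.left_commute)
  also have "\<dots> = complex_of_real (1/r) * complex_of_real (1/r) * complex_of_real (cnorm2 w)"
    by (simp only: cinner_self complex_cnj_complex_of_real mult.assoc)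
  also have "\<dots> = complex_of_real ((1/r) * (1/r) * cnorm2 w)" by simp
  also have "(1/r) * (1/r) * cnorm2 w = 1" using r0 by (simp add: rr[symmetric] field_simps)
  finally have ee: "cinner e e = 1" by simp
  have eW: "e \<in> W" using w(1) sub by (simp add: e_def vec.subspace_scale)
  have "N *v e = complex_of_real (1/r) *s (N *v w)"
    by (simp add: e_def vec_eq_iff matrix_vector_mult_def sum_distrib_left mult.left_commute)
  also have "\<dots> = lam *s e" using w(3) by (simp add: e_def vec_eq_iff mult.left_commute)
  finally have eN: "N *v e = lam *s e" .
  define f' where "f' = f(a := e)"
  define \<mu>' where "\<mu>' = \<mu>(a := lam)"
  have "\<forall>i\<in>insert a F. cinner (f' i) (f' i) = 1 \<and> N *v f' i = \<mu>' i *s f' i"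
    using f ee eN by (auto simp: f'_def \<mu>'_def)
  moreover have "\<forall>i\<in>insert a F. \<forall>j\<in>insert a F. i \<noteq> j \<longrightarrow> cinner (f' i) (f' j) = 0"
  proof (intro ballI impI)
    fix i j assume ij: "i \<in> insert a F" "j \<in> insert a F" "i \<noteq> j"
    have eF: "cinner e (f k) = 0" if "k \<in> F" for k using eW that by (simp add: W_def)
    have Fe: "cinner (f k) e = 0" if "k \<in> F" for k using eF[OF that] cinner_commute[of "f k" e] by simp
    show "cinner (f' i) (f' j) = 0"
      using ij o insert(2) eF Fe
      by (cases "i = a"; cases "j = a") (auto simp: f'_def)
  qed
  ultimately show ?case by blast
qed

theorem spectral:
  fixes N :: "'n::finite cmat"
  assumes nN: "cmat_normal N"
  shows "\<exists>U d. cmat_unitary U \<and> N = U ** cdiag d ** cmat_adjoint U"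
proof -
  have "\<exists>(f :: 'n \<Rightarrow> complex^'n) \<mu>. (\<forall>i. cinner (f i) (f i) = 1 \<and> N *v f i = \<mu> i *s f i) \<and>
    (\<forall>i j. i \<noteq> j \<longrightarrow> cinner (f i) (f j) = 0)"
    using onb_exists_F[OF nN, of UNIV] by simp
  then obtain f :: "'n \<Rightarrow> complex^'n" and \<mu> where f: "\<forall>i. cinner (f i) (f i) = 1 \<and> N *v f i = \<mu> i *s f i"
    and o: "\<forall>i j. i \<noteq> j \<longrightarrow> cinner (f i) (f j) = 0"
    by blast
  define U :: "'n cmat" where "U = (\<chi> r c. f c $ r)"
  have "cmat_adjoint U ** U = mat 1"
  proof -
    have "(cmat_adjoint U ** U) $ i $ j = cinner (f j) (f i)" for i j
      by (simp add: U_def mmult_nth cinner_def mult.commute)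
    then show ?thesis using f o by (auto simp: vec_eq_iff mat_def)
  qed
  then have u: "cmat_unitary U" by (simp add: unitary_I)
  have NU: "N ** U = U ** cdiag \<mu>"
  proof -
    have "(N ** U) $ r $ c = (N *v f c) $ r" for r c
      by (simp add: U_def mmult_nth matrix_vector_mult_def)
    moreover have "(U ** cdiag \<mu>) $ r $ c = \<mu> c * f c $ r" for r c
    proof -
      have "(U ** cdiag \<mu>) $ r $ c = (\<Sum>k\<in>UNIV. f k $ r * (if k = c then \<mu> k else 0))"
        by (simp add: U_def mmult_nth)
      also have "\<dots> = (\<Sum>k\<in>UNIV. if k = c then f c $ r * \<mu> c else 0)"
        by (rule sum.cong) auto
      finally show ?thesis by simp
    qed
    ultimately show ?thesis using f by (simp add: vec_eq_iff)
  qed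
  have "N = N ** (U ** cmat_adjoint U)" using u by (simp add: unitaryD1)
  also have "\<dots> = U ** cdiag \<mu> ** cmat_adjoint U" by (simp add: matrix_mul_assoc NU)
  finally show ?thesis using u by blast
qed




lemma sum_delta_mult: "(\<Sum>k\<in>UNIV. (if a = k then (1::complex) else 0) * X k) = X a"
  for a :: "'n::finite"
proof -
  have "(\<Sum>k\<in>UNIV. (if a = k then (1::complex) else 0) * X k) = (\<Sum>k\<in>UNIV. if k = a then X a else 0)"
    by (rule sum.cong) auto
  then show ?thesis by simp
qed

definition pmat :: "('n::finite \<Rightarrow> 'n) \<Rightarrow> 'n cmat" where
  "pmat \<sigma> = (\<chi> i j. if \<sigma> i = j then 1 else 0)"

lemma pmat_unitary:
  assumes "inj \<sigma>"
  shows "cmat_unitary (pmat \<sigma>)"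
proof -
  have "(pmat \<sigma> ** cmat_adjoint (pmat \<sigma>)) $ i $ j = (if \<sigma> j = \<sigma> i then 1 else 0)" for i j
  proof -
    have "(pmat \<sigma> ** cmat_adjoint (pmat \<sigma>)) $ i $ j =
          (\<Sum>k\<in>UNIV. (if \<sigma> i = k then (1::complex) else 0) * (if \<sigma> j = k then 1 else 0))"
      by (simp add: pmat_def mmult_nth if_distrib cong: if_cong)
    also have "\<dots> = (if \<sigma> j = \<sigma> i then 1 else 0)" by (rule sum_delta_mult)
    finally show ?thesis .
  qed
  then have "pmat \<sigma> ** cmat_adjoint (pmat \<sigma>) = mat 1"
    using assms by (auto simp: vec_eq_iff mat_def inj_eq)
  then show ?thesis unfolding cmat_unitary_def using matrix_left_right_inverse by metis
qed

lemma pmat_conj_diag: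
  assumes "inj \<sigma>"
  shows "pmat \<sigma> ** cdiag d ** cmat_adjoint (pmat \<sigma>) = cdiag (\<lambda>i. d (\<sigma> i))"
proof -
  have PD: "(pmat \<sigma> ** cdiag d) $ i $ l = (if \<sigma> i = l then 1 else 0) * d l" for i l
  proof -
    have "(pmat \<sigma> ** cdiag d) $ i $ l = (\<Sum>k\<in>UNIV. (if \<sigma> i = k then (1::complex) else 0) * (if k = l then d k else 0))"
      by (simp add: pmat_def mmult_nth)
    also have "\<dots> = (if \<sigma> i = l then 1 else 0) * d l" by (subst sum_delta_mult) simp
    finally show ?thesis .
  qed
  have adjP: "cmat_adjoint (pmat \<sigma>) $ l $ j = (if \<sigma> j = l then 1 else 0)" for l j
    by (simp add: pmat_def)
  have "(pmat \<sigma> ** cdiag d ** cmat_adjoint (pmat \<sigma>)) $ i $ j = (if i = j then d (\<sigma> i) else 0)" for i j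
  proof -
    have "(pmat \<sigma> ** cdiag d ** cmat_adjoint (pmat \<sigma>)) $ i $ j =
          (\<Sum>l\<in>UNIV. (if \<sigma> j = l then 1 else 0) * ((pmat \<sigma> ** cdiag d) $ i $ l))"
      unfolding mmult_nth[of "pmat \<sigma> ** cdiag d"] adjP by (simp only: mult.commute)
    also have "\<dots> = (pmat \<sigma> ** cdiag d) $ i $ (\<sigma> j)" by (rule sum_delta_mult)
    also have "\<dots> = (if i = j then d (\<sigma> i) else 0)" using assms by (auto simp: PD inj_eq)
    finally show ?thesis .
  qed
  then show ?thesis by (simp add: vec_eq_iff)
qed

definition sw :: "'n \<Rightarrow> 'n \<Rightarrow> 'n \<Rightarrow> 'n" where
  "sw i j k = (if k = i then j else if k = j then i else k)"

lemma sw_inj: "inj (sw i j)"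
  by (auto simp: inj_def sw_def split: if_splits)

lemma nrm_sum: "is_cmat_norm nu \<Longrightarrow> nu (\<Sum>i\<in>F. f i) \<le> (\<Sum>i\<in>F. nu (f i))"
proof (induct F rule: infinite_finite_induct)
  case (infinite A)
  then show ?case using nrm_0[of nu 0] by simp
next
  case empty
  then show ?case using nrm_0[of nu 0] by simp
next
  case (insert x F)
  then show ?case using nrm_tri[of nu "f x" "sum f F"] by simp
qed

lemma nrm_I_pos: "is_cmat_norm nu \<Longrightarrow> nu (mat 1 :: 'n::finite cmat) > 0"
proof -
  assume n: "is_cmat_norm nu"
  obtain i :: 'n where True by blast
  have "(mat 1 :: 'n cmat) \<noteq> 0"
    by (metis mat_nth one_neq_zero zero_index)
  then show ?thesis using n nrm_0[OF n] nrm_ge0[OF n, of "mat 1"] by (metis less_eq_real_def)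
qed

lemma nrm_real_scale: "is_cmat_norm nu \<Longrightarrow> nu (cmat_scale (complex_of_real a) X) = \<bar>a\<bar> * nu X"
  by (simp add: nrm_scale)

lemma diag_mono1:
  assumes uin: "unitarily_invariant_norm nu" and a: "\<bar>a\<bar> \<le> 1"
  shows "nu (cdiag (x(k := complex_of_real a * x k))) \<le> nu (cdiag x)"
proof -
  have n: "is_cmat_norm nu" using uin by (rule uin_norm)
  define s where "s = (\<lambda>i::'a. if i = k then (-1::complex) else 1)"
  have ss: "(\<lambda>i. cnj (s i) * s i) = (\<lambda>_. 1)" by (auto simp: s_def fun_eq_iff)
  have su: "cmat_unitary (cdiag s)"
    unfolding unitary_I adj_cdiag cdiag_mult ss by (simp add: cdiag_const)
  have eq: "cdiag (x(k := complex_of_real a * x k)) =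
        cmat_scale (complex_of_real ((1 + a) / 2)) (cdiag x) +
        cmat_scale (complex_of_real ((1 - a) / 2)) (cdiag s ** cdiag x ** mat 1)"
    by (simp add: vec_eq_iff s_def cdiag_mult) (auto simp: field_simps)
  have "nu (cdiag (x(k := complex_of_real a * x k))) \<le>
        nu (cmat_scale (complex_of_real ((1 + a) / 2)) (cdiag x)) +
        nu (cmat_scale (complex_of_real ((1 - a) / 2)) (cdiag s ** cdiag x ** mat 1))"
    unfolding eq by (rule nrm_tri[OF n])
  also have "\<dots> = \<bar>(1 + a) / 2\<bar> * nu (cdiag x) + \<bar>(1 - a) / 2\<bar> * nu (cdiag s ** cdiag x ** mat 1)"
    by (simp only: nrm_real_scale[OF n])
  also have "nu (cdiag s ** cdiag x ** mat 1) = nu (cdiag x)"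
    using uin_inv[OF uin su unitary_mat1] .
  also have "\<bar>(1 + a) / 2\<bar> * nu (cdiag x) + \<bar>(1 - a) / 2\<bar> * nu (cdiag x) = nu (cdiag x)"
    using a by (simp add: abs_if field_simps split: if_splits)
  finally show ?thesis .
qed

lemma diag_mono:
  assumes uin: "unitarily_invariant_norm nu" and a: "\<forall>i. \<bar>a i\<bar> \<le> 1"
  shows "nu (cdiag (\<lambda>i. complex_of_real (a i) * x i)) \<le> nu (cdiag x)"
proof -
  have "nu (cdiag (\<lambda>i. if i \<in> F then complex_of_real (a i) * x i else x i)) \<le> nu (cdiag x)"
    if "finite F" for F
    using that
  proof (induct F rule: finite_induct)
    case empty
    then show ?case by simp
  next
    case (insert k F)
    let ?y = "\<lambda>i. if i \<in> F then complex_of_real (a i) * x i else x i"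
    have eq: "(\<lambda>i. if i \<in> insert k F then complex_of_real (a i) * x i else x i) =
          ?y(k := complex_of_real (a k) * ?y k)"
      using insert(2) by (auto simp: fun_eq_iff)
    have m: "nu (cdiag (?y(k := complex_of_real (a k) * ?y k))) \<le> nu (cdiag ?y)"
      by (rule diag_mono1[OF uin a[rule_format]])
    show ?case unfolding eq using order_trans[OF m insert(3)] .
  qed
  from this[of UNIV] show ?thesis by simp
qed

lemma diag_strict:
  fixes c :: "'n::finite \<Rightarrow> real"
  assumes uin: "unitarily_invariant_norm nu" and c1: "\<forall>i. c i \<ge> 1" and cj: "c j > 1"
  shows "nu (cdiag (\<lambda>i. complex_of_real (c i))) > nu (mat 1 :: 'n cmat)"
proof -
  have n: "is_cmat_norm nu" using uin by (rule uin_norm)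
  define y where "y = (\<lambda>i. if i = j then complex_of_real (c j) else 1)"
  define a where "a = (\<lambda>i. if i = j then 1 else 1 / c i)"
  have aa: "\<forall>i. \<bar>a i\<bar> \<le> 1"
  proof
    fix i
    have ci: "c i \<ge> 1" using c1 by auto
    show "\<bar>a i\<bar> \<le> 1"
    proof (cases "i = j")
      case True
      then show ?thesis by (simp add: a_def)
    next
      case False
      then have "a i = 1 / c i" by (simp add: a_def)
      moreover have "0 < 1 / c i" "1 / c i \<le> 1" using ci by auto
      ultimately show ?thesis by simp
    qed
  qed
  have ay: "complex_of_real (a i) * complex_of_real (c i) = y i" for i
  proof (cases "i = j")
    case True
    then show ?thesis by (simp add: a_def y_def)
  next
    case False
    have "c i \<noteq> 0" using c1[rule_format, of i] by auto
    then show ?thesis using False by (simp add: a_def y_def)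
  qed
  have 1: "nu (cdiag y) \<le> nu (cdiag (\<lambda>i. complex_of_real (c i)))"
    using diag_mono[OF uin aa, of "\<lambda>i. complex_of_real (c i)"] ay by simp
  let ?n = "real CARD('n)"
  have sumy: "(\<Sum>i\<in>UNIV. y (sw i j k)) = complex_of_real (?n - 1 + c j)" for k
  proof -
    have "(\<Sum>i\<in>UNIV. y (sw i j k)) = (\<Sum>i\<in>UNIV. if i = k then complex_of_real (c j) else 1)"
      by (rule sum.cong) (auto simp: y_def sw_def)
    also have "\<dots> = complex_of_real (c j) + (\<Sum>i\<in>UNIV - {k}. 1)"
      by (subst sum.remove[of _ k]) auto
    also have "\<dots> = complex_of_real (?n - 1 + c j)"
      by (simp add: card_Diff_singleton of_nat_diff)
    finally show ?thesis .
  qed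
  have "(\<Sum>i\<in>UNIV. pmat (sw i j) ** cdiag y ** cmat_adjoint (pmat (sw i j))) =
        (\<Sum>i\<in>UNIV. cdiag (\<lambda>k. y (sw i j k)))"
    by (simp add: pmat_conj_diag sw_inj)
  also have "\<dots> = cmat_scale (complex_of_real (?n - 1 + c j)) (mat 1)"
    by (simp add: cdiag_sum sumy cdiag_const scale_mat)
  finally have eqs: "(\<Sum>i\<in>UNIV. pmat (sw i j) ** cdiag y ** cmat_adjoint (pmat (sw i j))) =
       cmat_scale (complex_of_real (?n - 1 + c j)) (mat 1)" .
  have npos: "?n \<ge> 1" by (simp add: Suc_leI)
  have "nu (cmat_scale (complex_of_real (?n - 1 + c j)) (mat 1 :: 'n cmat)) = \<bar>?n - 1 + c j\<bar> * nu (mat 1 :: 'n cmat)"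
    by (rule nrm_real_scale[OF n])
  then have "(?n - 1 + c j) * nu (mat 1 :: 'n cmat) = nu (cmat_scale (complex_of_real (?n - 1 + c j)) (mat 1 :: 'n cmat))"
    using cj npos by simp
  also have "\<dots> \<le> (\<Sum>i\<in>UNIV. nu (pmat (sw i j) ** cdiag y ** cmat_adjoint (pmat (sw i j))))"
    unfolding eqs[symmetric] by (rule nrm_sum[OF n])
  also have "\<dots> = (\<Sum>i\<in>(UNIV::'n set). nu (cdiag y))"
    by (rule sum.cong[OF refl]) (rule uin_inv[OF uin pmat_unitary[OF sw_inj] unitary_adj[OF pmat_unitary[OF sw_inj]]])
  also have "\<dots> = ?n * nu (cdiag y)" by simp
  finally have 2: "(?n - 1 + c j) * nu (mat 1 :: 'n cmat) \<le> ?n * nu (cdiag y)" .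
  have pos: "nu (mat 1 :: 'n cmat) > 0" by (rule nrm_I_pos[OF n])
  have "?n * nu (mat 1 :: 'n cmat) < (?n - 1 + c j) * nu (mat 1 :: 'n cmat)"
    using pos cj by (simp add: mult_strict_right_mono)
  then have "?n * nu (mat 1 :: 'n cmat) < ?n * nu (cdiag y)" using 2 by linarith
  then have "nu (mat 1 :: 'n cmat) < nu (cdiag y)" by (simp add: mult_less_cancel_left)
  then show ?thesis using 1 by linarith
qed




lemma inv_mean_ge1:
  fixes s :: real
  assumes "s > 0"
  shows "(s + 1 / s) / 2 \<ge> 1" and "s \<noteq> 1 \<Longrightarrow> (s + 1 / s) / 2 > 1"
proof -
  have "(s - 1)\<^sup>2 \<ge> 0" by simp
  then have a: "2 * s \<le> s * s + 1" by (simp add: power2_eq_square algebra_simps)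
  have eq: "(s + 1 / s) / 2 = (s * s + 1) / (2 * s)" using assms by (simp add: field_simps)
  show "(s + 1 / s) / 2 \<ge> 1" unfolding eq using a assms by simp
  assume "s \<noteq> 1"
  then have "(s - 1)\<^sup>2 > 0" by simp
  then have b: "2 * s < s * s + 1" by (simp add: power2_eq_square algebra_simps)
  show "(s + 1 / s) / 2 > 1" unfolding eq using b assms by simp
qed

lemma adj_cdiag_real: "cmat_adjoint (cdiag (\<lambda>i. complex_of_real (r i))) = cdiag (\<lambda>i. complex_of_real (r i))"
  by (simp add: adj_cdiag)

lemma involution_hermitian:
  fixes S :: "'n::finite cmat"
  assumes uin: "unitarily_invariant_norm nu" and SS: "S ** S = mat 1" and nS: "nu S = nu (mat 1 :: 'n cmat)"
  shows "cmat_adjoint S = S"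
proof -
  have n: "is_cmat_norm nu" using uin by (rule uin_norm)
  define H where "H = cmat_adjoint S ** S"
  have aH: "cmat_adjoint H = H" by (simp add: H_def adj_mult)
  have "cmat_normal H" unfolding cmat_normal_def aH ..
  then obtain W d where W: "cmat_unitary W" and HW: "H = W ** cdiag d ** cmat_adjoint W"
    using spectral by blast
  define G where "G = S ** W"
  have dW: "cmat_adjoint W ** H ** W = cdiag d" unfolding HW by (rule conj_conj[OF W])
  have dG: "cdiag d = cmat_adjoint G ** G"
    unfolding dW[symmetric] by (simp add: G_def H_def adj_mult matrix_mul_assoc)
  define t where "t i = (\<Sum>k\<in>UNIV. (cmod (G $ k $ i))\<^sup>2)" for i
  have dt: "d i = complex_of_real (t i)" for i
  proof -
    have "d i = (cmat_adjoint G ** G) $ i $ i" using dG by (metis cdiag_nth)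
    also have "\<dots> = (\<Sum>k\<in>UNIV. cnj (G $ k $ i) * G $ k $ i)" by (simp add: mmult_nth)
    also have "\<dots> = complex_of_real (t i)" unfolding t_def of_real_sum
      by (rule sum.cong[OF refl]) (metis complex_norm_square mult.commute)
    finally show ?thesis .
  qed
  have GG: "(cmat_adjoint W ** S) ** G = mat 1"
  proof -
    have "G ** (cmat_adjoint W ** S) = S ** (W ** cmat_adjoint W) ** S"
      by (simp add: G_def matrix_mul_assoc)
    also have "\<dots> = mat 1" using W SS by (simp add: unitaryD1)
    finally show ?thesis using matrix_left_right_inverse by blast
  qed
  have tpos: "t i > 0" for i
  proof -
    have "t i \<ge> 0" by (simp add: t_def sum_nonneg)
    moreover have "t i \<noteq> 0"
    proof
      assume "t i = 0"
      then have "\<forall>k. G $ k $ i = 0" by (simp add: t_def sum_nonneg_eq_0_iff)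
      then have "((cmat_adjoint W ** S) ** G) $ i $ i = 0" by (simp add: mmult_nth)
      then show False using GG by (simp add: mat_nth)
    qed
    ultimately show ?thesis by simp
  qed
  define s where "s i = sqrt (t i)" for i
  have spos: "s i > 0" for i using tpos by (simp add: s_def)
  have snz: "s i \<noteq> 0" for i using spos[of i] by simp
  have tnz: "t i \<noteq> 0" for i using tpos[of i] by simp
  have ss: "s i * s i = t i" for i using tpos[of i] by (simp add: s_def)
  define Dh where "Dh = cdiag (\<lambda>i. complex_of_real (s i))"
  define Dhi where "Dhi = cdiag (\<lambda>i. complex_of_real (1 / s i))"
  have DhiDh: "Dhi ** Dh = mat 1"
    using snz by (simp add: Dh_def Dhi_def cdiag_mult cdiag_const[symmetric])
  have aDhi: "cmat_adjoint Dhi = Dhi" by (simp add: Dhi_def adj_cdiag)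
  have DdD: "Dhi ** cdiag d ** Dhi = mat 1"
  proof -
    have "(\<lambda>i. complex_of_real (1 / s i) * d i * complex_of_real (1 / s i)) = (\<lambda>i. 1)"
      using snz ss tnz by (auto simp: fun_eq_iff dt field_simps of_real_mult[symmetric] simp del: of_real_mult)
    then show ?thesis by (simp add: Dhi_def cdiag_mult cdiag_const)
  qed
  define U where "U = S ** W ** Dhi ** cmat_adjoint W"
  have SU: "S = U ** W ** Dh ** cmat_adjoint W"
  proof -
    have "U ** W ** Dh ** cmat_adjoint W = S ** W ** (Dhi ** (cmat_adjoint W ** W) ** Dh) ** cmat_adjoint W"
      by (simp only: U_def matrix_mul_assoc)
    also have "\<dots> = S ** (W ** cmat_adjoint W)" using W
      by (simp add: unitaryD2 DhiDh matrix_mul_assoc)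
    also have "\<dots> = S" using W by (simp add: unitaryD1)
    finally show ?thesis by simp
  qed
  have aU: "cmat_adjoint U = W ** Dhi ** cmat_adjoint W ** cmat_adjoint S"
    by (simp add: U_def adj_mult aDhi matrix_mul_assoc)
  have UU: "cmat_adjoint U ** U = mat 1"
  proof -
    have "cmat_adjoint U ** U = W ** (Dhi ** (cmat_adjoint W ** (cmat_adjoint S ** S) ** W) ** Dhi) ** cmat_adjoint W"
      unfolding aU by (simp only: U_def matrix_mul_assoc)
    also have "\<dots> = W ** cmat_adjoint W"
      using dW DdD by (simp add: H_def)
    also have "\<dots> = mat 1" using W by (simp add: unitaryD1)
    finally show ?thesis .
  qed
  then have Uu: "cmat_unitary U" by (simp add: unitary_I)
  have "(cmat_adjoint W ** cmat_adjoint U) ** S ** W =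
        (cmat_adjoint W ** cmat_adjoint U) ** (U ** W ** Dh ** cmat_adjoint W) ** W"
    by (subst SU) (rule refl)
  also have "\<dots> = cmat_adjoint W ** (cmat_adjoint U ** U) ** W ** Dh ** (cmat_adjoint W ** W)"
    by (simp only: matrix_mul_assoc)
  also have "\<dots> = Dh" using W UU by (simp add: unitaryD2)
  finally have eDh: "(cmat_adjoint W ** cmat_adjoint U) ** S ** W = Dh" .
  have nDh: "nu Dh = nu S"
    unfolding eDh[symmetric]
    by (rule uin_inv[OF uin unitary_mult[OF unitary_adj[OF W] unitary_adj[OF Uu]] W])
  define T where "T = W ** Dhi ** cmat_adjoint W ** cmat_adjoint U"
  have TS: "T ** S = mat 1"
  proof -
    have "T ** S = W ** (Dhi ** (cmat_adjoint W ** ((cmat_adjoint U ** U) ** W)) ** Dh) ** cmat_adjoint W"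
      by (subst SU) (simp only: T_def matrix_mul_assoc)
    also have "\<dots> = W ** cmat_adjoint W" using W UU DhiDh by (simp add: unitaryD2)
    also have "\<dots> = mat 1" using W by (simp add: unitaryD1)
    finally show ?thesis .
  qed
  have ST: "S = T"
  proof -
    have "T = T ** (S ** S)" using SS by simp
    also have "\<dots> = (T ** S) ** S" by (simp add: matrix_mul_assoc)
    finally show ?thesis using TS by simp
  qed
  have eDhi: "cmat_adjoint W ** S ** (U ** W) = Dhi"
  proof -
    have "cmat_adjoint W ** S ** (U ** W) =
          (cmat_adjoint W ** W) ** Dhi ** (cmat_adjoint W ** ((cmat_adjoint U ** U) ** W))"
      by (subst ST) (simp only: T_def matrix_mul_assoc)
    also have "\<dots> = Dhi" using W UU by (simp add: unitaryD2)
    finally show ?thesis .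
  qed
  have nDhi: "nu Dhi = nu S"
    unfolding eDhi[symmetric]
    by (rule uin_inv[OF uin unitary_adj[OF W] unitary_mult[OF Uu W]])
  define c where "c i = (s i + 1 / s i) / 2" for i
  have C: "cdiag (\<lambda>i. complex_of_real (c i)) = cmat_scale (complex_of_real (1/2)) Dh + cmat_scale (complex_of_real (1/2)) Dhi"
    by (simp add: vec_eq_iff c_def Dh_def Dhi_def field_simps)
  have "nu (cdiag (\<lambda>i. complex_of_real (c i))) \<le>
        nu (cmat_scale (complex_of_real (1/2)) Dh) + nu (cmat_scale (complex_of_real (1/2)) Dhi)"
    unfolding C by (rule nrm_tri[OF n])
  also have "\<dots> = \<bar>1/2\<bar> * nu Dh + \<bar>1/2\<bar> * nu Dhi" by (simp only: nrm_real_scale[OF n])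
  also have "\<dots> = nu (mat 1 :: 'n cmat)" using nDh nDhi nS by simp
  finally have nC: "nu (cdiag (\<lambda>i. complex_of_real (c i))) \<le> nu (mat 1 :: 'n cmat)" .
  have s1: "s i = 1" for i
  proof (rule ccontr)
    assume "s i \<noteq> 1"
    then have "c i > 1" unfolding c_def by (rule inv_mean_ge1(2)[OF spos])
    moreover have "\<forall>k. c k \<ge> 1" unfolding c_def using inv_mean_ge1(1)[OF spos] by blast
    ultimately have "nu (cdiag (\<lambda>i. complex_of_real (c i))) > nu (mat 1 :: 'n cmat)"
      using diag_strict[OF uin] by blast
    then show False using nC by simp
  qed
  have "d = (\<lambda>_. 1)" using ss s1 by (auto simp: fun_eq_iff dt)
  then have "H = mat 1" using HW W by (simp add: cdiag_const unitaryD1)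
  then have "cmat_adjoint S ** S = mat 1" by (simp add: H_def)
  then have "cmat_adjoint S = cmat_adjoint S ** (S ** S)" using SS by simp
  also have "\<dots> = (cmat_adjoint S ** S) ** S" by (simp add: matrix_mul_assoc)
  finally show ?thesis using \<open>cmat_adjoint S ** S = mat 1\<close> by simp
qed




definition lag :: "complex set \<Rightarrow> complex \<Rightarrow> complex poly" where
  "lag L l = (\<Prod>m\<in>L - {l}. smult (1 / (l - m)) [:-m, 1:])"

lemma poly_lag_factor: "m \<noteq> l \<Longrightarrow> poly (smult (1 / (l - m)) [:-m, 1:]) x = (x - m) / (l - m)"
  for m l x :: complex
proof -
  have "poly (smult (1 / (l - m)) [:-m, 1:]) x = (1 / (l - m)) * (x - m)" by (simp add: algebra_simps diff_divide_distrib)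
  also have "\<dots> = (x - m) / (l - m)" by simp
  finally show ?thesis .
qed

lemma poly_lag:
  assumes fin: "finite L" and x: "x \<in> L"
  shows "poly (lag L l) x = (if x = l then 1 else 0)"
proof -
  have pl: "poly (lag L l) x = (\<Prod>m\<in>L - {l}. (x - m) / (l - m))"
    unfolding lag_def poly_prod by (rule prod.cong) (auto simp: poly_lag_factor diff_divide_distrib)
  show ?thesis
  proof (cases "x = l")
    case True
    have "(\<Prod>m\<in>L - {l}. (x - m) / (l - m)) = (\<Prod>m\<in>L - {l}. 1)"
      using True by (intro prod.cong) auto
    then show ?thesis using pl True by simp
  next
    case False
    have "(\<Prod>m\<in>L - {l}. (x - m) / (l - m)) = 0"
      using fin x False by (subst prod_zero_iff) auto
    then show ?thesis using pl False by simp
  qed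
qed

lemma KP_lemma:
  assumes uin: "unitarily_invariant_norm nu"
    and hyp: "\<forall>p. nu (cmat_poly p A) = nu (cmat_poly p N)"
    and U: "cmat_unitary U" and NU: "N = U ** cdiag d ** cmat_adjoint U"
    and p: "\<forall>x\<in>range d. poly p x = 0"
  shows "cmat_poly p A = 0"
proof -
  have n: "is_cmat_norm nu" using uin by (rule uin_norm)
  have "\<forall>i. poly p (d i) = 0" using p by simp
  then have "cmat_poly p N = 0" by (simp add: NU cpoly_conj[OF U] cpoly_cdiag)
  then have "nu (cmat_poly p A) = 0" using hyp nrm_0[OF n] by simp
  then show ?thesis using nrm_0[OF n] by simp
qed

lemma diag_pm1_unitary:
  assumes "\<forall>i. e i = 1 \<or> e i = -1"
  shows "cmat_unitary (cdiag e)"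
proof -
  have "(\<lambda>i. cnj (e i) * e i) = (\<lambda>_. 1)" using assms by (auto simp: fun_eq_iff) (metis complex_cnj_one complex_cnj_minus mult_1 mult_minus1 minus_minus)
  then show ?thesis unfolding unitary_I adj_cdiag cdiag_mult by (simp add: cdiag_const)
qed

lemma part1:
  fixes nu :: "'n::finite cmat \<Rightarrow> real" and A N :: "'n cmat"
  assumes uin: "unitarily_invariant_norm nu"
    and nN: "cmat_normal N"
    and hyp: "\<forall>p. nu (cmat_poly p A) = nu (cmat_poly p N)"
  shows "cmat_normal A"
proof -
  have n: "is_cmat_norm nu" using uin by (rule uin_norm)
  obtain U d where U: "cmat_unitary U" and NU: "N = U ** cdiag d ** cmat_adjoint U"
    using spectral[OF nN] by blast
  have cpN: "cmat_poly p N = U ** cdiag (\<lambda>i. poly p (d i)) ** cmat_adjoint U" for p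
    by (simp add: NU cpoly_conj[OF U] cpoly_cdiag)
  define L where "L = range d"
  have finL: "finite L" by (simp add: L_def)
  have KP2: "cmat_poly p A = cmat_poly q A" if "\<forall>x\<in>L. poly p x = poly q x" for p q
  proof -
    have "cmat_poly (p - q) A = 0"
      by (rule KP_lemma[OF uin hyp U NU]) (use that in \<open>simp add: L_def\<close>)
    then show ?thesis by (simp add: cpoly_diff)
  qed
  define E where "E l = cmat_poly (lag L l) A" for l
  have herm: "cmat_adjoint (E l) = E l" if l: "l \<in> L" for l
  proof -
    define r where "r = smult 2 (lag L l) - 1"
    define S where "S = cmat_poly r A"
    have pr: "poly r x = (if x = l then 1 else -1)" if "x \<in> L" for x
      using poly_lag[OF finL that, of l] by (simp add: r_def)
    have SS: "S ** S = mat 1"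
    proof -
      have "S ** S = cmat_poly (r * r) A" by (simp add: S_def cpoly_mult)
      also have "\<dots> = cmat_poly 1 A" by (rule KP2) (simp add: pr)
      finally show ?thesis by (simp add: cpoly_1)
    qed
    have nS: "nu S = nu (mat 1 :: 'n cmat)"
    proof -
      define e where "e i = poly r (d i)" for i
      have e: "\<forall>i. e i = 1 \<or> e i = -1" using pr by (simp add: e_def L_def)
      have "nu S = nu (cmat_poly r N)" using hyp by (simp add: S_def)
      also have "\<dots> = nu (cdiag e)" unfolding cpN e_def[symmetric]
        by (rule uin_inv[OF uin U unitary_adj[OF U]])
      also have "\<dots> = nu (cdiag e ** mat 1 ** mat 1)" by simp
      also have "\<dots> = nu (mat 1 :: 'n cmat)" by (rule uin_inv[OF uin diag_pm1_unitary[OF e] unitary_mat1])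
      finally show ?thesis .
    qed
    have aS: "cmat_adjoint S = S" by (rule involution_hermitian[OF uin SS nS])
    have SE: "S = cmat_scale 2 (E l) - mat 1"
      by (simp add: S_def r_def cpoly_diff cpoly_smult cpoly_1 E_def)
    have "cmat_scale 2 (cmat_adjoint (E l)) - mat 1 = cmat_scale 2 (E l) - mat 1"
      using aS unfolding SE by (simp add: adj_diff adj_scale adj_mat)
    then have "cmat_scale 2 (cmat_adjoint (E l)) = cmat_scale 2 (E l)" by simp
    then have "cmat_scale (1/2) (cmat_scale 2 (cmat_adjoint (E l))) = cmat_scale (1/2) (cmat_scale 2 (E l))"
      by simp
    then show ?thesis by (simp add: scale_scale)
  qed
  have AE: "A = (\<Sum>l\<in>L. cmat_scale l (E l))"
  proof -
    have "A = cmat_poly [:0, 1:] A" by (simp add: cpoly_X)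
    also have "\<dots> = cmat_poly (\<Sum>l\<in>L. smult l (lag L l)) A"
    proof (rule KP2, intro ballI)
      fix x assume x: "x \<in> L"
      have "poly (\<Sum>l\<in>L. smult l (lag L l)) x = (\<Sum>l\<in>L. l * (if x = l then 1 else 0))"
        by (simp add: poly_sum poly_lag[OF finL x])
      also have "\<dots> = (\<Sum>l\<in>L. if l = x then x else 0)" by (rule sum.cong) auto
      also have "\<dots> = x" using finL x by simp
      finally show "poly [:0, 1:] x = poly (\<Sum>l\<in>L. smult l (lag L l)) x" by simp
    qed
    also have "\<dots> = (\<Sum>l\<in>L. cmat_scale l (E l))" by (simp add: cpoly_sum cpoly_smult E_def)
    finally show ?thesis .
  qed
  define q where "q = (\<Sum>l\<in>L. smult (cnj l) (lag L l))"
  have aA: "cmat_adjoint A = cmat_poly q A"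
  proof -
    have "cmat_adjoint A = (\<Sum>l\<in>L. cmat_scale (cnj l) (cmat_adjoint (E l)))"
      by (subst AE) (simp add: adj_sum adj_scale)
    also have "\<dots> = (\<Sum>l\<in>L. cmat_scale (cnj l) (E l))" by (rule sum.cong) (auto simp: herm)
    also have "\<dots> = cmat_poly q A" by (simp add: q_def cpoly_sum cpoly_smult E_def)
    finally show ?thesis .
  qed
  have "A ** cmat_poly q A = cmat_poly q A ** A"
    using cpoly_comm[of "[:0,1:]" A q] by (simp only: cpoly_X)
  then show ?thesis unfolding cmat_normal_def aA .
qed

lemma rank_mult_left_le: "rank (M ** X) \<le> rank (X :: 'n cmat)" for M :: "'n::finite cmat"
  unfolding row_rank_def_gen
proof (rule vec.subset_le_dim, rule subsetI)
  fix r assume "r \<in> rows (M ** X)"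
  then obtain i where r: "r = row i (M ** X)" by (auto simp: rows_def)
  have "row i (M ** X) = (\<Sum>k\<in>UNIV. M $ i $ k *s row k X)"
    by (simp add: vec_eq_iff row_def mmult_nth sum_component)
  also have "\<dots> \<in> vec.span (rows X)"
    by (intro vec.span_sum vec.span_scale vec.span_base) (auto simp: rows_def)
  finally show "r \<in> vec.span (rows X)" using r by simp
qed

lemma rank_mult_right_le: "rank (X ** M) \<le> rank (X :: 'n cmat)" for M :: "'n::finite cmat"
proof -
  have "rows (X ** M) = (\<lambda>r. transpose M *v r) ` rows X"
  proof -
    have "row i (X ** M) = transpose M *v row i X" for i
      by (simp add: vec_eq_iff row_def mmult_nth matrix_vector_mult_def transpose_def mult.commute)
    then show ?thesis by (auto simp: rows_def)
  qed
  then show ?thesis unfolding row_rank_def_gen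
    using vec.dim_image_le[OF matrix_vector_mul_linear_gen, of "transpose M" "rows X"] by simp
qed

lemma rank_conj:
  assumes V: "cmat_unitary V"
  shows "rank (V ** X ** cmat_adjoint V) = rank X"
proof (rule antisym)
  show "rank (V ** X ** cmat_adjoint V) \<le> rank X"
    using rank_mult_right_le[of "V ** X" "cmat_adjoint V"] rank_mult_left_le[of V X] by simp
  have "rank X = rank (cmat_adjoint V ** (V ** X ** cmat_adjoint V) ** V)" by (simp add: conj_conj[OF V])
  also have "\<dots> \<le> rank (V ** X ** cmat_adjoint V)"
    using rank_mult_right_le[of "cmat_adjoint V ** (V ** X ** cmat_adjoint V)" V]
      rank_mult_left_le[of "cmat_adjoint V" "V ** X ** cmat_adjoint V"] by simp
  finally show "rank X \<le> rank (V ** X ** cmat_adjoint V)" .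
qed

lemma rank_diag01: "rank (cdiag (\<lambda>i::'n::finite. if i \<in> T then 1 else 0)) = card T"
proof -
  let ?D = "cdiag (\<lambda>i::'n. if i \<in> T then 1 else 0)"
  define B where "B = (\<lambda>i. axis i (1::complex)) ` T"
  have row: "row i ?D = (if i \<in> T then axis i 1 else 0)" for i
    by (auto simp: vec_eq_iff row_def axis_def)
  have B1: "B \<subseteq> rows ?D" by (auto simp: B_def rows_def row)
  have B2: "rows ?D \<subseteq> insert 0 B" by (auto simp: B_def rows_def row)
  have indB: "vec.independent B"
    by (rule vec.independent_mono[OF independent_cart_basis]) (auto simp: B_def cart_basis_def)
  have "vec.dim B \<le> vec.dim (rows ?D)" using B1 by (rule vec.dim_subset)
  moreover have "vec.dim (rows ?D) \<le> vec.dim (insert 0 B)" using B2 by (rule vec.dim_subset)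
  moreover have "vec.dim (insert 0 B) = vec.dim B" by (simp add: vec.dim_insert vec.span_zero)
  ultimately have "rank ?D = vec.dim B" unfolding row_rank_def_gen by linarith
  also have "\<dots> = card B" by (rule vec.dim_eq_card_independent[OF indB])
  also have "\<dots> = card T" unfolding B_def by (rule card_image) (auto simp: inj_on_def axis_eq_axis)
  finally show ?thesis .
qed

lemma proj_conj:
  assumes V: "cmat_unitary V"
  shows "cmat_projection (V ** cdiag (\<lambda>i. if i \<in> T then 1 else 0) ** cmat_adjoint V)"
proof -
  let ?e = "\<lambda>i. if i \<in> T then (1::complex) else 0"
  have "(\<lambda>i. ?e i * ?e i) = ?e" by auto
  moreover have "(\<lambda>i. cnj (?e i)) = ?e" by auto
  ultimately show ?thesis
    unfolding cmat_projection_def conj_mult[OF V]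
    by (simp add: cdiag_mult adj_mult adj_cdiag matrix_mul_assoc)
qed

lemma perm_exists:
  fixes a b :: "'n::finite \<Rightarrow> 'b"
  assumes "\<forall>l. card {i. a i = l} = card {i. b i = l}"
  shows "\<exists>\<sigma>. inj \<sigma> \<and> (\<forall>i. a i = b (\<sigma> i))"
proof -
  have "\<exists>h. bij_betw h {i. a i = l} {i. b i = l}" for l
    using assms by (intro finite_same_card_bij) auto
  then obtain h where h: "\<And>l. bij_betw (h l) {i. a i = l} {i. b i = l}" by metis
  define \<sigma> where "\<sigma> i = h (a i) i" for i
  have b: "b (\<sigma> i) = a i" for i
    using bij_betw_apply[OF h[of "a i"], of i] by (simp add: \<sigma>_def)
  have "inj \<sigma>"
  proof (rule injI)
    fix i j assume e: "\<sigma> i = \<sigma> j"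
    then have aij: "a i = a j" using b by metis
    have "inj_on (h (a i)) {k. a k = a i}" using h bij_betw_imp_inj_on by blast
    then show "i = j" using e aij unfolding \<sigma>_def by (auto dest: inj_onD)
  qed
  then show ?thesis using b by metis
qed

lemma part2:
  fixes nu :: "'n::finite cmat \<Rightarrow> real" and A N :: "'n cmat"
  assumes uin: "unitarily_invariant_norm nu"
    and nN: "cmat_normal N" and nA: "cmat_normal A"
    and hyp: "\<forall>p. nu (cmat_poly p A) = nu (cmat_poly p N)"
    and sep: "separates_projections_by_rank nu"
  shows "unitarily_similar A N"
proof -
  obtain U d where U: "cmat_unitary U" and NU: "N = U ** cdiag d ** cmat_adjoint U"
    using spectral[OF nN] by blast
  obtain V a where V: "cmat_unitary V" and AV: "A = V ** cdiag a ** cmat_adjoint V"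
    using spectral[OF nA] by blast
  have cpN: "cmat_poly p N = U ** cdiag (\<lambda>i. poly p (d i)) ** cmat_adjoint U" for p
    by (simp add: NU cpoly_conj[OF U] cpoly_cdiag)
  have cpA: "cmat_poly p A = V ** cdiag (\<lambda>i. poly p (a i)) ** cmat_adjoint V" for p
    by (simp add: AV cpoly_conj[OF V] cpoly_cdiag)
  define L where "L = range d"
  have finL: "finite L" by (simp add: L_def)
  have aL: "a i \<in> L" for i
  proof -
    define m where "m = (\<Prod>\<mu>\<in>L. [:-\<mu>, 1:])"
    have pm: "poly m x = (\<Prod>\<mu>\<in>L. x - \<mu>)" for x by (simp add: m_def poly_prod)
    have "cmat_poly m A = 0"
      by (rule KP_lemma[OF uin hyp U NU]) (auto simp: pm finL L_def)
    then have "cdiag (\<lambda>i. poly m (a i)) = cmat_adjoint V ** 0 ** V"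
      using conj_conj[OF V, of "cdiag (\<lambda>i. poly m (a i))"] by (simp add: cpA)
    then have "poly m (a i) = 0" by (simp add: cdiag_eq_0)
    then show ?thesis using finL by (simp add: pm prod_zero_iff)
  qed
  have card_eq: "card {i. a i = l} = card {i. d i = l}" for l
  proof (cases "l \<in> L")
    case False
    then have "{i. a i = l} = {}" "{i. d i = l} = {}" using aL by (auto simp: L_def)
    then show ?thesis by simp
  next
    case True
    have pa: "poly (lag L l) (a i) = (if i \<in> {i. a i = l} then 1 else 0)" for i
      using poly_lag[OF finL aL[of i], of l] by simp
    have pd: "poly (lag L l) (d i) = (if i \<in> {i. d i = l} then 1 else 0)" for i
      using poly_lag[OF finL, of "d i" l] by (simp add: L_def)
    have eA: "cmat_poly (lag L l) A = V ** cdiag (\<lambda>i. if i \<in> {i. a i = l} then 1 else 0) ** cmat_adjoint V"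
      unfolding cpA pa ..
    have eN: "cmat_poly (lag L l) N = U ** cdiag (\<lambda>i. if i \<in> {i. d i = l} then 1 else 0) ** cmat_adjoint U"
      unfolding cpN pd ..
    have sepD: "\<And>P Q. cmat_projection P \<Longrightarrow> cmat_projection Q \<Longrightarrow> nu P = nu Q \<Longrightarrow> rank P = rank Q"
      using sep unfolding separates_projections_by_rank_def by blast
    have "rank (cmat_poly (lag L l) A) = rank (cmat_poly (lag L l) N)"
    proof (rule sepD)
      show "cmat_projection (cmat_poly (lag L l) A)" unfolding eA by (rule proj_conj[OF V])
      show "cmat_projection (cmat_poly (lag L l) N)" unfolding eN by (rule proj_conj[OF U])
      show "nu (cmat_poly (lag L l) A) = nu (cmat_poly (lag L l) N)" using hyp by blast
    qed
    then show ?thesis unfolding eA eN rank_conj[OF V] rank_conj[OF U] rank_diag01 .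
  qed
  obtain \<sigma> where \<sigma>: "inj \<sigma>" "\<forall>i. a i = d (\<sigma> i)"
    using perm_exists[of a d] card_eq by blast
  have "cdiag a = pmat \<sigma> ** cdiag d ** cmat_adjoint (pmat \<sigma>)"
  proof -
    have "a = (\<lambda>i. d (\<sigma> i))" using \<sigma>(2) by auto
    then show ?thesis using pmat_conj_diag[OF \<sigma>(1), of d] by simp
  qed
  also have "cdiag d = cmat_adjoint U ** N ** U" unfolding NU by (rule conj_conj[OF U, symmetric])
  finally have ad: "cdiag a = pmat \<sigma> ** (cmat_adjoint U ** N ** U) ** cmat_adjoint (pmat \<sigma>)" .
  define W where "W = V ** pmat \<sigma> ** cmat_adjoint U"
  have W: "cmat_unitary W"
    unfolding W_def by (intro unitary_mult V pmat_unitary \<sigma>(1) unitary_adj U)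
  have "A = W ** N ** cmat_adjoint W"
    unfolding AV ad W_def by (simp add: adj_mult matrix_mul_assoc)
  then show ?thesis unfolding unitarily_similar_def using W by blast
qed

theorem theorem2p4:
  fixes nu :: "'n::finite cmat \<Rightarrow> real" and A N :: "'n cmat"
  assumes "unitarily_invariant_norm nu"
    and "cmat_normal N"
    and "\<forall>p. nu (cmat_poly p A) = nu (cmat_poly p N)"
  shows "cmat_normal A \<and>
         (separates_projections_by_rank nu \<longrightarrow> unitarily_similar A N)"
proof -
  have nA: "cmat_normal A" by (rule part1[OF assms])
  show ?thesis using nA part2[OF assms(1,2) nA assms(3)] by blast
qed


end
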